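(* There is an absolute constant $C>0$ such that for every sufficiently large prime $p$ and every $f:\mathbb{F}_p\to\mathbb{C}$, $$\Big|\sum_{\substack{x_1,x_2,x_3\in\mathbb{F}_p\\ x_1\neq x_3}} f(x_1)\,\overline{f(x_3)}\,\overline{f(x_2)}\,f(x_2+x_3-x_1)\,K_1(x_1,x_2,x_3)\Big|\le C\,p^{-3/4}\,\|f\|_2^4 .$$
   Context: Let $p$ be an odd prime, $e_p(x)=e^{-2\pi i x/p}$ for $x\in\mathbb{F}_p$, $\|f\|_2=\big(\sum_{x\in\mathbb{F}_p}|f(x)|^2\big)^{1/2}$. For $x_1,x_2,x_3\in\mathbb{F}_p$ and $y_1,y_2,y_3\in\mathbb{F}_p$ set $$R_1=x_1y_1^2-x_2y_2^2-x_3y_3^2+(x_3+x_2-x_1)(y_2+y_3-y_1)^2+(x_2-x_1)(y_1-y_3),$$ and define $K_1(x_1,x_2,x_3)=p^{-3}\sum_{y_1,y_2,y_3\in\mathbb{F}_p}e_p(R_1)$. *)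

theory Defs
  imports "HOL-Analysis.Analysis" "HOL-Computational_Algebra.Primes"
begin

text \<open>F_p is represented by the residues {0..<p} of int; functions on F_p are
  functions int => complex, of which only the values on {0..<p} matter.
  e_p(x) = exp(-2 pi i x / p), which depends only on x mod p.\<close>

definition ep :: "int \<Rightarrow> int \<Rightarrow> complex" where
  "ep p x = exp (- 2 * pi * \<i> * of_int x / of_int p)"

definition R1 :: "int \<Rightarrow> int \<Rightarrow> int \<Rightarrow> int \<Rightarrow> int \<Rightarrow> int \<Rightarrow> int" where
  "R1 x1 x2 x3 y1 y2 y3 =
     x1 * y1^2 - x2 * y2^2 - x3 * y3^2 + (x3 + x2 - x1) * (y2 + y3 - y1)^2
     + (x2 - x1) * (y1 - y3)"

definition K1 :: "int \<Rightarrow> int \<Rightarrow> int \<Rightarrow> int \<Rightarrow> complex" where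
  "K1 p x1 x2 x3 = (1 / of_int p ^ 3) *
     (\<Sum>y1\<in>{0..<p}. \<Sum>y2\<in>{0..<p}. \<Sum>y3\<in>{0..<p}. ep p (R1 x1 x2 x3 y1 y2 y3))"

definition norm2 :: "int \<Rightarrow> (int \<Rightarrow> complex) \<Rightarrow> real" where
  "norm2 p f = sqrt (\<Sum>x\<in>{0..<p}. (cmod (f x))^2)"

end

theory Submission
  imports Defs "HOL-Number_Theory.Number_Theory"
begin


lemma ep_add: "ep p (x + y) = ep p x * ep p y"
proof -
  have "- 2 * pi * \<i> * of_int (x+y) / of_int p = - 2 * pi * \<i> * of_int x / of_int p + - 2 * pi * \<i> * of_int y / of_int p"
    by (simp add: field_simps diff_divide_distrib add_divide_distrib)
  then show ?thesis unfolding ep_def by (simp only: exp_add)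
qed

lemma ep_mult_p: assumes "p > 0" shows "ep p (p * k) = 1"
proof -
  have "ep p (p*k) = exp (- (2 * of_int k * pi * \<i>))"
    unfolding ep_def using assms by (simp add: field_simps)
  also have "\<dots> = inverse (exp (2 * of_int k * pi * \<i>))" by (simp add: exp_minus)
  also have "exp (2 * of_int k * pi * \<i>) = 1" by (rule exp_integer_2pi) simp
  finally show ?thesis by simp
qed

lemma ep_mod: assumes "p > 0" shows "ep p (x mod p) = ep p x"
proof -
  have "ep p x = ep p (x mod p + p * (x div p))" by simp
  also have "\<dots> = ep p (x mod p)" using ep_mult_p[OF assms] by (simp only: ep_add) simp
  finally show ?thesis by simp
qed

lemma ep_cong: assumes "p > 0" "[x = y] (mod p)" shows "ep p x = ep p y"
  using assms ep_mod[of p x] ep_mod[of p y] unfolding cong_def by metis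

lemma ep_one_iff: assumes "p > 0" shows "ep p x = 1 \<longleftrightarrow> p dvd x"
proof
  assume "p dvd x" then obtain k where "x = p * k" by auto
  then show "ep p x = 1" using ep_mult_p[OF assms] by simp
next
  assume "ep p x = 1"
  then obtain n :: int where n: "- 2 * pi * of_int x / of_int p = of_int (2*n) * pi"
    unfolding ep_def exp_eq_1 by (auto simp: field_simps)
  then have "- of_int x = of_int p * (of_int n :: real)" using assms
    by (simp add: field_simps) (metis mult.commute mult_left_cancel pi_neq_zero minus_mult_right)
  then have "- x = p * n" by (metis of_int_eq_iff of_int_minus of_int_mult)
  then show "p dvd x" by (metis dvd_minus_iff dvd_triv_left)
qed

lemma ep_cnj: "cnj (ep p x) = ep p (- x)"
  unfolding ep_def by (simp add: exp_cnj)

lemma ep_norm: "norm (ep p x) = 1"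
  unfolding ep_def by (simp add: norm_exp_eq_Re)

lemma ep_0: "ep p 0 = 1" unfolding ep_def by simp

lemma sum_perm:
  assumes "finite A" "f ` A \<subseteq> A" "inj_on f A"
  shows "(\<Sum>x\<in>A. g (f x)) = (\<Sum>x\<in>A. g x)"
  using sum.reindex[OF assms(3), of g] endo_inj_surj[OF assms] by simp

lemma sum_shift:
  fixes p c :: int assumes "p > 0"
  shows "(\<Sum>y\<in>{0..<p}. F ((y + c) mod p)) = (\<Sum>y\<in>{0..<p}. F y)"
proof (rule sum_perm)
  show "(\<lambda>y. (y + c) mod p) ` {0..<p} \<subseteq> {0..<p}" using assms by auto
  show "inj_on (\<lambda>y. (y + c) mod p) {0..<p}"
  proof (rule inj_onI)
    fix x y assume "x \<in> {0..<p}" "y \<in> {0..<p}" "(x + c) mod p = (y + c) mod p"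
    then show "x = y"
      by (metis atLeastLessThan_iff cong_add_rcancel cong_def cong_less_imp_eq_int)
  qed
qed simp

lemma sum_mult_perm:
  fixes p h :: int assumes "prime p" "\<not> p dvd h"
  shows "(\<Sum>y\<in>{0..<p}. F ((h * y) mod p)) = (\<Sum>y\<in>{0..<p}. F y)"
proof (rule sum_perm)
  have p0: "p > 0" using assms prime_gt_0_int by blast
  show "(\<lambda>y. (h * y) mod p) ` {0..<p} \<subseteq> {0..<p}" using p0 by auto
  have cop: "coprime h p" using assms
    by (metis coprime_commute prime_imp_coprime)
  show "inj_on (\<lambda>y. (h * y) mod p) {0..<p}"
  proof (rule inj_onI)
    fix x y assume "x \<in> {0..<p}" "y \<in> {0..<p}" "(h * x) mod p = (h * y) mod p"
    then show "x = y"
      by (metis atLeastLessThan_iff cong_def cong_less_imp_eq_int cong_mult_lcancel cop)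
  qed
qed simp

lemma ep_orth:
  fixes p L :: int assumes "p > 0"
  shows "(\<Sum>y\<in>{0..<p}. ep p (y * L)) = (if p dvd L then of_int p else 0)"
proof (cases "p dvd L")
  case True
  then obtain k where "L = p * k" by auto
  then have "\<And>y. ep p (y * L) = 1" using ep_mult_p[OF assms]
    by (metis mult.left_commute)
  then show ?thesis using True assms by simp
next
  case False
  let ?S = "\<Sum>y\<in>{0..<p}. ep p (y * L)"
  have "?S = (\<Sum>y\<in>{0..<p}. ep p (((y + 1) mod p) * L))"
    using sum_shift[OF assms, of "\<lambda>y. ep p (y * L)" 1] by simp
  also have "\<dots> = (\<Sum>y\<in>{0..<p}. ep p (y * L) * ep p L)"
  proof (rule sum.cong)
    fix y
    have "[((y + 1) mod p) * L = y * L + L] (mod p)"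
      by (simp add: cong_def mod_simps algebra_simps)
    then show "ep p (((y + 1) mod p) * L) = ep p (y * L) * ep p L"
      using ep_cong[OF assms] ep_add by metis
  qed simp
  also have "\<dots> = ?S * ep p L" by (simp add: sum_distrib_right)
  finally have "?S * (1 - ep p L) = 0" by (simp add: algebra_simps)
  moreover have "ep p L \<noteq> 1" using ep_one_iff[OF assms] False by simp
  ultimately show ?thesis using False by simp
qed

lemma quad_fiber:
  fixes p a b x :: int
  assumes p: "prime p" and nd: "\<not> (p dvd a \<and> p dvd b)"
  shows "card {y\<in>{0..<p}. [a*y^2+b*y = a*x^2+b*x] (mod p)} \<le> 2"
proof -
  have p0: "p > 0" using p prime_gt_0_int by blast
  define B where "B = {y\<in>{0..<p}. p dvd a*(x+y)+b}"
  have sub: "{y\<in>{0..<p}. [a*y^2+b*y = a*x^2+b*x] (mod p)} \<subseteq> {x mod p} \<union> B"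
  proof
    fix y assume "y \<in> {y\<in>{0..<p}. [a*y^2+b*y = a*x^2+b*x] (mod p)}"
    then have y: "y \<in> {0..<p}" and c: "[a*y^2+b*y = a*x^2+b*x] (mod p)" by auto
    have "p dvd (a*y^2+b*y) - (a*x^2+b*x)" using c by (simp add: cong_iff_dvd_diff)
    moreover have "(a*y^2+b*y) - (a*x^2+b*x) = (y - x) * (a*(x+y)+b)"
      by (simp add: algebra_simps power2_eq_square)
    ultimately have "p dvd (y - x) \<or> p dvd (a*(x+y)+b)"
      using p by (simp add: prime_dvd_mult_iff)
    then show "y \<in> {x mod p} \<union> B"
    proof
      assume "p dvd y - x"
      then have "[y = x] (mod p)" by (simp add: cong_iff_dvd_diff)
      then have "y mod p = x mod p" by (simp add: cong_def)
      moreover have "y mod p = y" using y by simp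
      ultimately show ?thesis by simp
    next
      assume "p dvd a*(x+y)+b" then show ?thesis using y B_def by simp
    qed
  qed
  have fB: "finite B" unfolding B_def by (rule finite_subset[of _ "{0..<p}"]) auto
  have cB: "card B \<le> 1"
  proof -
    note fB
    moreover have "\<forall>u\<in>B. \<forall>v\<in>B. u = v"
    proof (intro ballI)
      fix u v assume u: "u \<in> B" and v: "v \<in> B"
      have "p dvd (a*(x+u)+b) - (a*(x+v)+b)" using u v B_def by (intro dvd_diff) auto
      moreover have "(a*(x+u)+b) - (a*(x+v)+b) = a * (u - v)" by (simp add: algebra_simps)
      ultimately have "p dvd a \<or> p dvd (u - v)" using p by (simp add: prime_dvd_mult_iff)
      moreover have "\<not> p dvd a"
      proof
        assume "p dvd a"
        then have "p dvd a*(x+u)" by simp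
        moreover have "p dvd a*(x+u)+b" using u B_def by simp
        ultimately have "p dvd b" using dvd_add_right_iff by blast
        then show False using nd \<open>p dvd a\<close> by simp
      qed
      ultimately have "[u = v] (mod p)" by (simp add: cong_iff_dvd_diff)
      then show "u = v" using u v B_def cong_less_imp_eq_int by auto
    qed
    ultimately show ?thesis using card_le_Suc0_iff_eq by auto
  qed
  have "card {y\<in>{0..<p}. [a*y^2+b*y = a*x^2+b*x] (mod p)} \<le> card ({x mod p} \<union> B)"
    by (rule card_mono[OF _ sub]) (simp add: fB)
  also have "\<dots> \<le> card {x mod p} + card B" by (rule card_Un_le)
  also have "\<dots> \<le> 2" using cB by simp
  finally show ?thesis .
qed

lemma sum_fiber_le:
  fixes phi :: "int \<Rightarrow> int" and F :: "int \<Rightarrow> real"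
  assumes fW: "finite W" and fL: "finite L" and sub: "phi ` W \<subseteq> L"
    and fib: "\<And>l. card {w\<in>W. phi w = l} \<le> 2" and nn: "\<And>l. l \<in> L \<Longrightarrow> F l \<ge> 0"
  shows "(\<Sum>w\<in>W. F (phi w)) \<le> 2 * (\<Sum>l\<in>L. F l)"
proof -
  have "(\<Sum>w\<in>W. F (phi w)) = (\<Sum>l\<in>phi ` W. \<Sum>w\<in>{x. x \<in> W \<and> phi x = l}. F (phi w))"
    by (rule sum.image_gen[OF fW])
  also have "\<dots> = (\<Sum>l\<in>phi ` W. real (card {x. x \<in> W \<and> phi x = l}) * F l)"
    by (rule sum.cong) auto
  also have "\<dots> \<le> (\<Sum>l\<in>phi ` W. 2 * F l)"
  proof (rule sum_mono)
    fix l assume "l \<in> phi ` W"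
    then have "F l \<ge> 0" using nn sub by auto
    moreover have "real (card {x. x \<in> W \<and> phi x = l}) \<le> 2" using fib[of l] by simp
    ultimately show "real (card {x. x \<in> W \<and> phi x = l}) * F l \<le> 2 * F l"
      by (simp add: mult_right_mono)
  qed
  also have "\<dots> \<le> (\<Sum>l\<in>L. 2 * F l)"
    by (rule sum_mono2[OF fL sub]) (simp add: nn)
  finally show ?thesis by (simp add: sum_distrib_left)
qed

lemma parseval_fiber:
  fixes p :: int and G :: "int \<Rightarrow> complex" and q :: "int \<Rightarrow> int"
  assumes p0: "p > 0"
    and fib: "\<And>a. a \<in> {0..<p} \<Longrightarrow> card {b\<in>{0..<p}. p dvd q a - q b} \<le> 2"
  shows "(\<Sum>l\<in>{0..<p}. (cmod (\<Sum>a\<in>{0..<p}. G a * ep p (l * q a)))^2)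
           \<le> 2 * real_of_int p * (\<Sum>a\<in>{0..<p}. (cmod (G a))^2)"
proof -
  define A where "A = {0..<p}"
  define z where "z l = (\<Sum>a\<in>A. G a * ep p (l * q a))" for l
  define c where "c a b = (p dvd q a - q b)" for a b
  have fA: "finite A" unfolding A_def by simp
  have zz: "z l * cnj (z l) = (\<Sum>a\<in>A. \<Sum>b\<in>A. G a * cnj (G b) * ep p (l * (q a - q b)))" for l
  proof -
    have "z l * cnj (z l) = (\<Sum>a\<in>A. G a * ep p (l * q a)) * (\<Sum>b\<in>A. cnj (G b) * ep p (- (l * q b)))"
      unfolding z_def by (simp add: ep_cnj)
    also have "\<dots> = (\<Sum>a\<in>A. \<Sum>b\<in>A. (G a * ep p (l * q a)) * (cnj (G b) * ep p (- (l * q b))))"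
      by (rule sum_product)
    also have "\<dots> = (\<Sum>a\<in>A. \<Sum>b\<in>A. G a * cnj (G b) * ep p (l * (q a - q b)))"
    proof (intro sum.cong refl)
      fix a b
      have "ep p (l * (q a - q b)) = ep p (l * q a) * ep p (- (l * q b))"
        by (metis ep_add right_diff_distrib uminus_add_conv_diff add.commute)
      then show "(G a * ep p (l * q a)) * (cnj (G b) * ep p (- (l * q b))) = G a * cnj (G b) * ep p (l * (q a - q b))"
        by (simp add: algebra_simps)
    qed
    finally show ?thesis .
  qed
  have "(\<Sum>l\<in>A. z l * cnj (z l)) = (\<Sum>a\<in>A. \<Sum>b\<in>A. \<Sum>l\<in>A. G a * cnj (G b) * ep p (l * (q a - q b)))"
  proof -
    have "(\<Sum>l\<in>A. z l * cnj (z l)) = (\<Sum>l\<in>A. \<Sum>a\<in>A. \<Sum>b\<in>A. G a * cnj (G b) * ep p (l * (q a - q b)))"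
      by (simp add: zz)
    also have "\<dots> = (\<Sum>a\<in>A. \<Sum>l\<in>A. \<Sum>b\<in>A. G a * cnj (G b) * ep p (l * (q a - q b)))"
      by (rule sum.swap)
    also have "\<dots> = (\<Sum>a\<in>A. \<Sum>b\<in>A. \<Sum>l\<in>A. G a * cnj (G b) * ep p (l * (q a - q b)))"
      by (rule sum.cong[OF refl], rule sum.swap)
    finally show ?thesis .
  qed
  also have "\<dots> = (\<Sum>a\<in>A. \<Sum>b\<in>A. G a * cnj (G b) * (if c a b then of_int p else 0))"
    by (simp add: sum_distrib_left[symmetric] ep_orth[OF p0] A_def c_def)
  finally have eq: "(\<Sum>l\<in>A. z l * cnj (z l)) = (\<Sum>a\<in>A. \<Sum>b\<in>A. G a * cnj (G b) * (if c a b then of_int p else 0))" .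
  define X where "X = (\<Sum>a\<in>A. \<Sum>b\<in>A. if c a b then (cmod (G a))^2 else 0)"
  define Y where "Y = (\<Sum>a\<in>A. \<Sum>b\<in>A. if c a b then (cmod (G b))^2 else 0)"
  have XY: "Y = X"
  proof -
    have sym: "c a b = c b a" for a b unfolding c_def by (metis dvd_minus_iff minus_diff_eq)
    show ?thesis unfolding X_def Y_def by (subst sum.swap) (simp add: sym)
  qed
  have Xle: "X \<le> (\<Sum>a\<in>A. 2 * (cmod (G a))^2)"
    unfolding X_def
  proof (rule sum_mono)
    fix a assume a: "a \<in> A"
    have "(\<Sum>b\<in>A. if c a b then (cmod (G a))^2 else 0) = (\<Sum>b\<in>{b\<in>A. c a b}. (cmod (G a))^2)"
      by (simp add: sum.inter_filter[OF fA] del: sum_constant)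
    also have "\<dots> = real (card {b\<in>A. c a b}) * (cmod (G a))^2" by simp
    also have "\<dots> \<le> 2 * (cmod (G a))^2"
      using fib[of a] a unfolding A_def c_def by (intro mult_right_mono) auto
    finally show "(\<Sum>b\<in>A. if c a b then (cmod (G a))^2 else 0) \<le> 2 * (cmod (G a))^2" .
  qed
  have "(\<Sum>l\<in>A. (cmod (z l))^2) = cmod (\<Sum>l\<in>A. z l * cnj (z l))"
  proof -
    have "(\<Sum>l\<in>A. z l * cnj (z l)) = of_real (\<Sum>l\<in>A. (cmod (z l))^2)"
      by (simp only: of_real_sum complex_norm_square)
    moreover have "(\<Sum>l\<in>A. (cmod (z l))^2) \<ge> 0" by (simp add: sum_nonneg)
    ultimately show ?thesis by (metis norm_of_real abs_of_nonneg)
  qed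
  also have "\<dots> \<le> (\<Sum>a\<in>A. \<Sum>b\<in>A. cmod (G a * cnj (G b) * (if c a b then of_int p else 0)))"
    unfolding eq by (rule order_trans[OF norm_sum sum_mono[OF norm_sum]])
  also have "\<dots> \<le> (\<Sum>a\<in>A. \<Sum>b\<in>A. real_of_int p * ((if c a b then (cmod (G a))^2 else 0) / 2 + (if c a b then (cmod (G b))^2 else 0) / 2))"
  proof (intro sum_mono)
    fix a b
    have "cmod (G a) * cmod (G b) \<le> ((cmod (G a))^2 + (cmod (G b))^2) / 2"
      using sum_squares_bound[of "cmod (G a)" "cmod (G b)"] by (simp add: power2_eq_square)
    then show "cmod (G a * cnj (G b) * (if c a b then of_int p else 0)) \<le> real_of_int p * ((if c a b then (cmod (G a))^2 else 0) / 2 + (if c a b then (cmod (G b))^2 else 0) / 2)"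
      using p0 by (auto simp: norm_mult)
  qed
  also have "\<dots> = real_of_int p / 2 * (X + Y)"
    unfolding X_def Y_def by (simp add: sum_distrib_left sum.distrib algebra_simps add_divide_distrib)
  also have "\<dots> = real_of_int p * X" using XY by simp
  also have "\<dots> \<le> real_of_int p * (\<Sum>a\<in>A. 2 * (cmod (G a))^2)"
    using Xle p0 by (intro mult_left_mono) auto
  finally show ?thesis unfolding A_def z_def
    by (simp add: sum_distrib_left[symmetric] algebra_simps)
qed



definition Cq :: "int \<Rightarrow> int \<Rightarrow> int \<Rightarrow> int \<Rightarrow> int \<Rightarrow> int" where
  "Cq x1 x2 x3 uu vv = x1* uu^2 - x2* vv^2 + (x3+x2-x1)*(vv-uu)^2 + (x2-x1)* uu"

lemma R1_shift: "R1 x1 x2 x3 (y3+uu) (y3+vv) y3 = y3 * (2 * ((x1-x3 + (x1-x2))* uu - (x1-x3)* vv)) + Cq x1 x2 x3 uu vv"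
  unfolding R1_def Cq_def by (simp add: algebra_simps power2_eq_square)

lemma Cq_line: "Cq x1 x2 x3 ((x1-x3)*w) ((x1-x3 + (x1-x2))*w) = -(x1-x2)*(x1-x3)*w*(1+(x2+x3)*w)"
  unfolding Cq_def by (simp add: algebra_simps power2_eq_square)

lemma R1_mod: "[R1 x1 x2 x3 (a mod p) (b mod p) c = R1 x1 x2 x3 a b c] (mod p)"
proof -
  have ha: "[a mod p = a] (mod p)" and hb: "[b mod p = b] (mod p)" by (simp_all add: cong_def)
  show ?thesis unfolding R1_def
    by (intro cong_add cong_mult cong_diff cong_pow cong_refl ha hb)
qed

lemma Cq_cong: "[a = a'] (mod p) \<Longrightarrow> [b = b'] (mod p) \<Longrightarrow> [Cq x1 x2 x3 a b = Cq x1 x2 x3 a' b'] (mod p)"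
  unfolding Cq_def by (intro cong_add cong_mult cong_diff cong_pow cong_refl)

lemma K1_formula:
  fixes p x1 x2 x3 :: int
  assumes p: "prime p" and p2: "p > 2" and nd: "\<not> p dvd (x1 - x3)"
  shows "K1 p x1 x2 x3 = 1 / of_int p ^ 2 *
           (\<Sum>w\<in>{0..<p}. ep p (-(x1-x2)*(x1-x3)*w*(1+(x2+x3)*w)))"
proof -
  have p0: "p > 0" using p2 by simp
  define A where "A = {0..<p}"
  define h where "h = x1 - x3"
  define k where "k = x1 - x2"
  define L where "L uu vv = (h + k) * uu - h * vv" for uu vv
  define C where "C uu vv = Cq x1 x2 x3 uu vv" for uu vv
  have cop: "coprime h p" using p nd unfolding h_def
    by (metis coprime_commute prime_imp_coprime)
  obtain h' where hh': "[h * h' = 1] (mod p)" using cong_solve_coprime_int[OF cop] by blast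
  define v0 where "v0 uu = (h' * (h + k) * uu) mod p" for uu
  have n2: "\<not> p dvd 2" using p2 zdvd_imp_le by fastforce
  let ?S = "\<Sum>y1\<in>A. \<Sum>y2\<in>A. \<Sum>y3\<in>A. ep p (R1 x1 x2 x3 y1 y2 y3)"
  have "?S = (\<Sum>y1\<in>A. \<Sum>y3\<in>A. \<Sum>y2\<in>A. ep p (R1 x1 x2 x3 y1 y2 y3))"
    by (rule sum.cong[OF refl], rule sum.swap)
  also have "\<dots> = (\<Sum>y3\<in>A. \<Sum>y1\<in>A. \<Sum>y2\<in>A. ep p (R1 x1 x2 x3 y1 y2 y3))"
    by (rule sum.swap)
  also have "\<dots> = (\<Sum>y3\<in>A. \<Sum>uu\<in>A. \<Sum>vv\<in>A. ep p (y3 * (2 * L uu vv)) * ep p (C uu vv))"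
  proof (rule sum.cong[OF refl])
    fix y3
    have "(\<Sum>y1\<in>A. \<Sum>y2\<in>A. ep p (R1 x1 x2 x3 y1 y2 y3))
        = (\<Sum>uu\<in>A. \<Sum>y2\<in>A. ep p (R1 x1 x2 x3 ((uu + y3) mod p) y2 y3))"
      unfolding A_def by (rule sum_shift[OF p0, symmetric])
    also have "\<dots> = (\<Sum>uu\<in>A. \<Sum>vv\<in>A. ep p (R1 x1 x2 x3 ((uu + y3) mod p) ((vv + y3) mod p) y3))"
      unfolding A_def by (rule sum.cong[OF refl], rule sum_shift[OF p0, symmetric])
    also have "\<dots> = (\<Sum>uu\<in>A. \<Sum>vv\<in>A. ep p (y3 * (2 * L uu vv)) * ep p (C uu vv))"
    proof (intro sum.cong refl)
      fix uu vv
      have "ep p (R1 x1 x2 x3 ((uu + y3) mod p) ((vv + y3) mod p) y3) = ep p (R1 x1 x2 x3 (y3 + uu) (y3 + vv) y3)"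
        using ep_cong[OF p0 R1_mod] by (simp add: add.commute)
      also have "\<dots> = ep p (y3 * (2 * L uu vv)) * ep p (C uu vv)"
        unfolding R1_shift L_def C_def h_def k_def by (rule ep_add)
      finally show "ep p (R1 x1 x2 x3 ((uu + y3) mod p) ((vv + y3) mod p) y3) = ep p (y3 * (2 * L uu vv)) * ep p (C uu vv)" .
    qed
    finally show "(\<Sum>y1\<in>A. \<Sum>y2\<in>A. ep p (R1 x1 x2 x3 y1 y2 y3)) = (\<Sum>uu\<in>A. \<Sum>vv\<in>A. ep p (y3 * (2 * L uu vv)) * ep p (C uu vv))" .
  qed
  also have "\<dots> = (\<Sum>uu\<in>A. \<Sum>y3\<in>A. \<Sum>vv\<in>A. ep p (y3 * (2 * L uu vv)) * ep p (C uu vv))"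
    by (rule sum.swap)
  also have "\<dots> = (\<Sum>uu\<in>A. \<Sum>vv\<in>A. \<Sum>y3\<in>A. ep p (y3 * (2 * L uu vv)) * ep p (C uu vv))"
    by (rule sum.cong[OF refl], rule sum.swap)
  also have "\<dots> = (\<Sum>uu\<in>A. \<Sum>vv\<in>A. (if p dvd L uu vv then of_int p * ep p (C uu vv) else 0))"
  proof (intro sum.cong refl)
    fix uu vv
    have "(\<Sum>y3\<in>A. ep p (y3 * (2 * L uu vv)) * ep p (C uu vv)) = (\<Sum>y3\<in>A. ep p (y3 * (2 * L uu vv))) * ep p (C uu vv)"
      by (simp add: sum_distrib_right)
    also have "\<dots> = (if p dvd 2 * L uu vv then of_int p else 0) * ep p (C uu vv)"
      unfolding A_def by (simp add: ep_orth[OF p0])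
    also have "(p dvd 2 * L uu vv) = (p dvd L uu vv)" using p n2 by (simp add: prime_dvd_mult_iff)
    finally show "(\<Sum>y3\<in>A. ep p (y3 * (2 * L uu vv)) * ep p (C uu vv)) = (if p dvd L uu vv then of_int p * ep p (C uu vv) else 0)"
      by simp
  qed
  also have "\<dots> = (\<Sum>uu\<in>A. of_int p * ep p (C uu (v0 uu)))"
  proof (rule sum.cong[OF refl])
    fix uu assume uu: "uu \<in> A"
    have iff: "p dvd L uu vv \<longleftrightarrow> vv = v0 uu" if vv: "vv \<in> A" for vv
    proof -
      have hv0: "[h * v0 uu = (h + k) * uu] (mod p)"
      proof -
        have "[h * v0 uu = h * (h' * (h + k) * uu)] (mod p)"
          unfolding v0_def by (simp add: cong_def mod_simps)
        also have "[h * (h' * (h + k) * uu) = (h * h') * ((h + k) * uu)] (mod p)"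
          by (simp add: algebra_simps)
        also have "[(h * h') * ((h + k) * uu) = 1 * ((h + k) * uu)] (mod p)"
          by (intro cong_mult hh' cong_refl)
        finally show ?thesis by simp
      qed
      have "p dvd L uu vv \<longleftrightarrow> [h * vv = (h + k) * uu] (mod p)"
        unfolding L_def by (simp add: cong_iff_dvd_diff dvd_diff_commute)
      also have "\<dots> \<longleftrightarrow> [h * vv = h * v0 uu] (mod p)"
        using hv0 by (meson cong_sym cong_trans)
      also have "\<dots> \<longleftrightarrow> [vv = v0 uu] (mod p)"
        using cop by (simp add: cong_mult_lcancel)
      also have "\<dots> \<longleftrightarrow> vv = v0 uu"
      proof
        assume "[vv = v0 uu] (mod p)"
        then show "vv = v0 uu" using vv p0 unfolding A_def v0_def
          by (intro cong_less_imp_eq_int) auto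
      qed simp
      finally show ?thesis .
    qed
    have "(\<Sum>vv\<in>A. (if p dvd L uu vv then of_int p * ep p (C uu vv) else 0))
        = (\<Sum>vv\<in>A. (if vv = v0 uu then of_int p * ep p (C uu vv) else 0))"
      by (rule sum.cong[OF refl]) (simp add: iff)
    also have "\<dots> = of_int p * ep p (C uu (v0 uu))"
      using p0 unfolding A_def v0_def by (simp add: sum.delta')
    finally show "(\<Sum>vv\<in>A. (if p dvd L uu vv then of_int p * ep p (C uu vv) else 0)) = of_int p * ep p (C uu (v0 uu))" .
  qed
  also have "\<dots> = (\<Sum>w\<in>A. of_int p * ep p (C ((h * w) mod p) (v0 ((h * w) mod p))))"
    unfolding A_def
    by (rule sum_mult_perm[OF p, symmetric]) (use nd h_def in simp)
  also have "\<dots> = (\<Sum>w\<in>A. of_int p * ep p (-(x1-x2)*(x1-x3)*w*(1+(x2+x3)*w)))"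
  proof (rule sum.cong[OF refl])
    fix w
    have c1: "[(h * w) mod p = h * w] (mod p)" by (simp add: cong_def)
    have c2: "[v0 ((h * w) mod p) = (h + k) * w] (mod p)"
    proof -
      have "[v0 ((h * w) mod p) = h' * (h + k) * (h * w)] (mod p)"
        unfolding v0_def by (simp add: cong_def mod_simps)
      also have "[h' * (h + k) * (h * w) = (h * h') * ((h + k) * w)] (mod p)"
        by (simp add: algebra_simps)
      also have "[(h * h') * ((h + k) * w) = 1 * ((h + k) * w)] (mod p)"
        by (intro cong_mult hh' cong_refl)
      finally show ?thesis by simp
    qed
    have "ep p (C ((h * w) mod p) (v0 ((h * w) mod p))) = ep p (C (h * w) ((h + k) * w))"
      unfolding C_def by (rule ep_cong[OF p0 Cq_cong[OF c1 c2]])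
    also have "\<dots> = ep p (-(x1-x2)*(x1-x3)*w*(1+(x2+x3)*w))"
      unfolding C_def h_def k_def using Cq_line[of x1 x2 x3 w] by simp
    finally show "of_int p * ep p (C ((h * w) mod p) (v0 ((h * w) mod p))) = of_int p * ep p (-(x1-x2)*(x1-x3)*w*(1+(x2+x3)*w))"
      by simp
  qed
  finally have "?S = of_int p * (\<Sum>w\<in>A. ep p (-(x1-x2)*(x1-x3)*w*(1+(x2+x3)*w)))"
    by (simp add: sum_distrib_left)
  then show ?thesis unfolding K1_def A_def using p0 by (simp add: power3_eq_cube power2_eq_square)
qed



definition Psi :: "int \<Rightarrow> (int \<Rightarrow> complex) \<Rightarrow> int \<Rightarrow> int \<Rightarrow> complex" where
  "Psi p f s l = (\<Sum>a\<in>{0..<p}. f a * f ((s - a) mod p) * ep p (l * (a * (s - a))))"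

lemma inner_w:
  fixes p w :: int and f :: "int \<Rightarrow> complex"
  assumes p0: "p > 0"
  shows "(\<Sum>x1\<in>{0..<p}. \<Sum>x2\<in>{0..<p}. \<Sum>x3\<in>{0..<p}.
            f x1 * cnj (f x3) * cnj (f x2) * f ((x2 + x3 - x1) mod p) * ep p (-(x1-x2)*(x1-x3)*w*(1+(x2+x3)*w)))
       = (\<Sum>s\<in>{0..<p}. of_real ((cmod (Psi p f s ((w * (1 + s * w)) mod p)))^2))"
proof -
  define A where "A = {0..<p}"
  define G where "G x1 x2 x3 = f x1 * cnj (f x3) * cnj (f x2) * f ((x2 + x3 - x1) mod p) * ep p (-(x1-x2)*(x1-x3)*w*(1+(x2+x3)*w))" for x1 x2 x3
  define lam where "lam s = (w * (1 + s * w)) mod p" for s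
  define P where "P s a = f a * f ((s - a) mod p) * ep p (lam s * (a * (s - a)))" for s a
  have "(\<Sum>x1\<in>A. \<Sum>x2\<in>A. \<Sum>x3\<in>A. G x1 x2 x3) = (\<Sum>x1\<in>A. \<Sum>x2\<in>A. \<Sum>s\<in>A. G x1 x2 ((s + - x2) mod p))"
    unfolding A_def by (rule sum.cong[OF refl], rule sum.cong[OF refl], rule sum_shift[OF p0, symmetric])
  also have "\<dots> = (\<Sum>x1\<in>A. \<Sum>s\<in>A. \<Sum>x2\<in>A. G x1 x2 ((s + - x2) mod p))"
    by (rule sum.cong[OF refl], rule sum.swap)
  also have "\<dots> = (\<Sum>s\<in>A. \<Sum>x1\<in>A. \<Sum>x2\<in>A. G x1 x2 ((s + - x2) mod p))"
    by (rule sum.swap)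
  also have "\<dots> = (\<Sum>s\<in>A. \<Sum>x1\<in>A. \<Sum>x2\<in>A. P s x1 * cnj (P s x2))"
  proof (intro sum.cong refl)
    fix s x1 x2 assume x2: "x2 \<in> A"
    define x3 where "x3 = (s + - x2) mod p"
    have c3: "[x3 = s - x2] (mod p)" unfolding x3_def by (simp add: cong_def)
    have "[x2 + x3 - x1 = x2 + (s - x2) - x1] (mod p)"
      by (intro cong_add cong_diff cong_refl c3)
    then have m: "(x2 + x3 - x1) mod p = (s - x1) mod p" by (simp add: cong_def)
    have x3': "x3 = (s - x2) mod p" unfolding x3_def by simp
    have "[-(x1-x2)*(x1-x3)*w*(1+(x2+x3)*w) = -(x1-x2)*(x1-(s-x2))*w*(1+(x2+(s-x2))*w)] (mod p)"
      by (intro cong_add cong_mult cong_diff cong_uminus cong_refl c3)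
    also have "-(x1-x2)*(x1-(s-x2))*w*(1+(x2+(s-x2))*w) = (w * (1 + s * w)) * (x1 * (s - x1)) + - ((w * (1 + s * w)) * (x2 * (s - x2)))"
      by (simp add: algebra_simps)
    also have "[(w * (1 + s * w)) * (x1 * (s - x1)) + - ((w * (1 + s * w)) * (x2 * (s - x2))) = lam s * (x1 * (s - x1)) + - (lam s * (x2 * (s - x2)))] (mod p)"
    proof -
      have "[w * (1 + s * w) = lam s] (mod p)" unfolding lam_def by (simp add: cong_def)
      then show ?thesis by (intro cong_add cong_mult cong_uminus cong_refl)
    qed
    finally have ce: "ep p (-(x1-x2)*(x1-x3)*w*(1+(x2+x3)*w)) = ep p (lam s * (x1 * (s - x1))) * ep p (- (lam s * (x2 * (s - x2))))"
      using ep_cong[OF p0] ep_add by metis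
    have fx2: "f (x2 mod p) = f x2" using x2 unfolding A_def by simp
    show "G x1 x2 ((s + - x2) mod p) = P s x1 * cnj (P s x2)"
      unfolding G_def P_def x3_def[symmetric] using ce m x3'
      by (simp add: ep_cnj)
  qed
  also have "\<dots> = (\<Sum>s\<in>A. of_real ((cmod (Psi p f s (lam s)))^2))"
  proof (rule sum.cong[OF refl])
    fix s
    have ps: "Psi p f s (lam s) = (\<Sum>a\<in>A. P s a)" unfolding Psi_def P_def A_def by simp
    have "(\<Sum>x1\<in>A. \<Sum>x2\<in>A. P s x1 * cnj (P s x2)) = (\<Sum>a\<in>A. P s a) * (\<Sum>b\<in>A. cnj (P s b))"
      by (rule sum_product[symmetric])
    also have "\<dots> = Psi p f s (lam s) * cnj (Psi p f s (lam s))" by (simp add: ps)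
    also have "\<dots> = of_real ((cmod (Psi p f s (lam s)))^2)" by (rule complex_norm_square[symmetric])
    finally show "(\<Sum>x1\<in>A. \<Sum>x2\<in>A. P s x1 * cnj (P s x2)) = of_real ((cmod (Psi p f s (lam s)))^2)" .
  qed
  finally show ?thesis unfolding A_def G_def lam_def .
qed

lemma psi_bound:
  fixes p s :: int and f :: "int \<Rightarrow> complex"
  assumes p: "prime p"
  shows "(\<Sum>w\<in>{0..<p}. (cmod (Psi p f s ((w * (1 + s * w)) mod p)))^2)
     \<le> 4 * real_of_int p * (\<Sum>a\<in>{0..<p}. (cmod (f a * f ((s - a) mod p)))^2)"
proof -
  have p0: "p > 0" using p prime_gt_0_int by blast
  define A where "A = {0..<p}"
  have np1: "\<not> p dvd 1" using p not_prime_unit by blast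
  have step1: "(\<Sum>w\<in>A. (cmod (Psi p f s ((w * (1 + s * w)) mod p)))^2) \<le> 2 * (\<Sum>l\<in>A. (cmod (Psi p f s l))^2)"
  proof (rule sum_fiber_le)
    show "finite A" "finite A" unfolding A_def by simp_all
    show "(\<lambda>w. (w * (1 + s * w)) mod p) ` A \<subseteq> A" unfolding A_def using p0 by auto
    show "0 \<le> (cmod (Psi p f s l))^2" for l by simp
    fix l
    show "card {w \<in> A. (w * (1 + s * w)) mod p = l} \<le> 2"
    proof (cases "{w \<in> A. (w * (1 + s * w)) mod p = l} = {}")
      case True then show ?thesis by (simp only: card.empty)
    next
      case False
      then obtain w0 where w0: "w0 \<in> A" "(w0 * (1 + s * w0)) mod p = l" by auto
      have sub: "{w \<in> A. (w * (1 + s * w)) mod p = l} \<subseteq> {y\<in>{0..<p}. [s*y^2+1*y = s*w0^2+1*w0] (mod p)}"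
      proof
        fix y assume "y \<in> {w \<in> A. (w * (1 + s * w)) mod p = l}"
        then have y: "y \<in> A" "(y * (1 + s * y)) mod p = (w0 * (1 + s * w0)) mod p" using w0 by auto
        have "y * (1 + s * y) = s*y^2+1*y" "w0 * (1 + s * w0) = s*w0^2+1*w0"
          by (simp_all add: algebra_simps power2_eq_square)
        then show "y \<in> {y\<in>{0..<p}. [s*y^2+1*y = s*w0^2+1*w0] (mod p)}"
          using y unfolding A_def cong_def by simp
      qed
      have cc: "card {y\<in>{0..<p}. [s*y^2+1*y = s*w0^2+1*w0] (mod p)} \<le> 2"
        by (rule quad_fiber[OF p]) (use np1 in simp)
      show ?thesis
        by (rule order_trans[OF card_mono[OF _ sub] cc]) (rule finite_subset[of _ "{0..<p}"], auto)
    qed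
  qed
  have step2: "(\<Sum>l\<in>A. (cmod (Psi p f s l))^2) \<le> 2 * real_of_int p * (\<Sum>a\<in>A. (cmod (f a * f ((s - a) mod p)))^2)"
  proof -
    have "(\<Sum>l\<in>{0..<p}. (cmod (\<Sum>a\<in>{0..<p}. (f a * f ((s - a) mod p)) * ep p (l * (a * (s - a)))))^2)
           \<le> 2 * real_of_int p * (\<Sum>a\<in>{0..<p}. (cmod (f a * f ((s - a) mod p)))^2)"
    proof (rule parseval_fiber[OF p0])
      fix a assume a: "a \<in> {0..<p}"
      have sub: "{b\<in>{0..<p}. p dvd a * (s - a) - b * (s - b)} \<subseteq> {y\<in>{0..<p}. [(-1)*y^2+s*y = (-1)*a^2+s*a] (mod p)}"
      proof
        fix b assume "b \<in> {b\<in>{0..<p}. p dvd a * (s - a) - b * (s - b)}"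
        then have b: "b \<in> {0..<p}" "[a * (s - a) = b * (s - b)] (mod p)"
          by (auto simp: cong_iff_dvd_diff)
        have "b * (s - b) = (-1)*b^2+s*b" "a * (s - a) = (-1)*a^2+s*a"
          by (simp_all add: algebra_simps power2_eq_square)
        then show "b \<in> {y\<in>{0..<p}. [(-1)*y^2+s*y = (-1)*a^2+s*a] (mod p)}"
          using b by (auto simp: cong_sym_eq)
      qed
      have cc: "card {y\<in>{0..<p}. [(-1)*y^2+s*y = (-1)*a^2+s*a] (mod p)} \<le> 2"
        by (rule quad_fiber[OF p]) (use np1 in simp)
      show "card {b\<in>{0..<p}. p dvd a * (s - a) - b * (s - b)} \<le> 2"
        by (rule order_trans[OF card_mono[OF _ sub] cc]) (rule finite_subset[of _ "{0..<p}"], auto)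
    qed
    then show ?thesis unfolding A_def Psi_def by (simp add: mult.assoc)
  qed
  show ?thesis using step1 step2 unfolding A_def by linarith
qed

lemma conv_sum:
  fixes p :: int and f :: "int \<Rightarrow> complex"
  assumes p0: "p > 0"
  shows "(\<Sum>s\<in>{0..<p}. \<Sum>a\<in>{0..<p}. (cmod (f a * f ((s - a) mod p)))^2) = (\<Sum>x\<in>{0..<p}. (cmod (f x))^2)^2"
proof -
  have "(\<Sum>s\<in>{0..<p}. \<Sum>a\<in>{0..<p}. (cmod (f a * f ((s - a) mod p)))^2)
      = (\<Sum>a\<in>{0..<p}. \<Sum>s\<in>{0..<p}. (cmod (f a))^2 * (cmod (f ((s + - a) mod p)))^2)"
    by (subst sum.swap) (simp add: norm_mult power_mult_distrib)
  also have "\<dots> = (\<Sum>a\<in>{0..<p}. (cmod (f a))^2 * (\<Sum>s\<in>{0..<p}. (cmod (f ((s + - a) mod p)))^2))"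
    by (simp add: sum_distrib_left)
  also have "\<dots> = (\<Sum>a\<in>{0..<p}. (cmod (f a))^2 * (\<Sum>x\<in>{0..<p}. (cmod (f x))^2))"
  proof (rule sum.cong[OF refl])
    fix a
    show "(cmod (f a))^2 * (\<Sum>s\<in>{0..<p}. (cmod (f ((s + - a) mod p)))^2) = (cmod (f a))^2 * (\<Sum>x\<in>{0..<p}. (cmod (f x))^2)"
      using sum_shift[OF p0, of "\<lambda>x. (cmod (f x))^2" "-a"] by simp
  qed
  also have "\<dots> = (\<Sum>x\<in>{0..<p}. (cmod (f x))^2)^2"
    by (simp add: sum_distrib_right[symmetric] power2_eq_square)
  finally show ?thesis .
qed



lemma main_bound:
  fixes p :: int and f :: "int \<Rightarrow> complex"
  assumes p: "prime p" and p3: "p \<ge> 3"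
  shows "cmod (\<Sum>x1\<in>{0..<p}. \<Sum>x2\<in>{0..<p}. \<Sum>x3\<in>{0..<p}.
        if x1 \<noteq> x3 then f x1 * cnj (f x3) * cnj (f x2) * f ((x2 + x3 - x1) mod p)
                         * K1 p x1 x2 x3 else 0)
     \<le> 5 / real_of_int p * (\<Sum>x\<in>{0..<p}. (cmod (f x))^2)^2"
proof -
  have p0: "p > 0" and p2: "p > 2" using p3 by auto
  define A where "A = {0..<p}"
  define N where "N = (\<Sum>x\<in>A. (cmod (f x))^2)"
  define F where "F x1 x2 x3 = f x1 * cnj (f x3) * cnj (f x2) * f ((x2 + x3 - x1) mod p)" for x1 x2 x3
  define E where "E w x1 x2 x3 = ep p (-(x1-x2)*(x1-x3)*w*(1+(x2+x3)*w))" for w x1 x2 x3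
  define c :: complex where "c = 1 / of_int p ^ 2"
  define Kp where "Kp x1 x2 x3 = c * (\<Sum>w\<in>A. E w x1 x2 x3)" for x1 x2 x3
  define Tot where "Tot = (\<Sum>x1\<in>A. \<Sum>x2\<in>A. \<Sum>x3\<in>A. F x1 x2 x3 * Kp x1 x2 x3)"
  define D where "D = (\<Sum>x1\<in>A. \<Sum>x2\<in>A. \<Sum>x3\<in>A. if x1 = x3 then F x1 x2 x3 * Kp x1 x2 x3 else 0)"
  have S_eq: "(\<Sum>x1\<in>{0..<p}. \<Sum>x2\<in>{0..<p}. \<Sum>x3\<in>{0..<p}.
        if x1 \<noteq> x3 then f x1 * cnj (f x3) * cnj (f x2) * f ((x2 + x3 - x1) mod p)
                         * K1 p x1 x2 x3 else 0) = Tot - D"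
  proof -
    have "(\<Sum>x1\<in>{0..<p}. \<Sum>x2\<in>{0..<p}. \<Sum>x3\<in>{0..<p}.
        if x1 \<noteq> x3 then f x1 * cnj (f x3) * cnj (f x2) * f ((x2 + x3 - x1) mod p)
                         * K1 p x1 x2 x3 else 0)
      = (\<Sum>x1\<in>A. \<Sum>x2\<in>A. \<Sum>x3\<in>A. F x1 x2 x3 * Kp x1 x2 x3 - (if x1 = x3 then F x1 x2 x3 * Kp x1 x2 x3 else 0))"
      unfolding A_def
    proof (intro sum.cong refl)
      fix x1 x2 x3 assume x1: "x1 \<in> {0..<p}" and x3: "x3 \<in> {0..<p}"
      show "(if x1 \<noteq> x3 then f x1 * cnj (f x3) * cnj (f x2) * f ((x2 + x3 - x1) mod p) * K1 p x1 x2 x3 else 0)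
            = F x1 x2 x3 * Kp x1 x2 x3 - (if x1 = x3 then F x1 x2 x3 * Kp x1 x2 x3 else 0)"
      proof (cases "x1 = x3")
        case True then show ?thesis by simp
      next
        case False
        have "\<not> p dvd (x1 - x3)"
        proof
          assume "p dvd (x1 - x3)"
          then have "[x1 = x3] (mod p)" by (simp add: cong_iff_dvd_diff)
          then show False using False x1 x3 cong_less_imp_eq_int by auto
        qed
        then have "K1 p x1 x2 x3 = Kp x1 x2 x3"
          unfolding Kp_def c_def E_def A_def by (rule K1_formula[OF p p2])
        then show ?thesis using False unfolding F_def by simp
      qed
    qed
    also have "\<dots> = Tot - D" unfolding Tot_def D_def by (simp add: sum_subtractf)
    finally show ?thesis .
  qed
  have D_eq: "D = of_real (N^2 / real_of_int p)"
  proof -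
    have "D = (\<Sum>x1\<in>A. \<Sum>x2\<in>A. F x1 x2 x1 * Kp x1 x2 x1)"
      unfolding D_def A_def by (simp add: sum.delta)
    also have "\<dots> = (\<Sum>x1\<in>A. \<Sum>x2\<in>A. of_real ((cmod (f x1))^2 * (cmod (f x2))^2 / real_of_int p))"
    proof (intro sum.cong refl)
      fix x1 x2 assume x2: "x2 \<in> A"
      have "Kp x1 x2 x1 = c * of_int p" unfolding Kp_def E_def A_def using p0 by (simp add: ep_0)
      also have "\<dots> = 1 / of_int p" unfolding c_def using p0 by (simp add: power2_eq_square)
      finally have k: "Kp x1 x2 x1 = 1 / of_int p" .
      have "F x1 x2 x1 = (f x1 * cnj (f x1)) * (f x2 * cnj (f x2))"
        unfolding F_def using x2 A_def by simp
      also have "\<dots> = of_real ((cmod (f x1))^2 * (cmod (f x2))^2)"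
        by (simp add: complex_norm_square[symmetric])
      finally show "F x1 x2 x1 * Kp x1 x2 x1 = of_real ((cmod (f x1))^2 * (cmod (f x2))^2 / real_of_int p)"
        using k by simp
    qed
    also have "\<dots> = of_real (\<Sum>x1\<in>A. \<Sum>x2\<in>A. (cmod (f x1))^2 * (cmod (f x2))^2 / real_of_int p)"
      by simp
    also have "(\<Sum>x1\<in>A. \<Sum>x2\<in>A. (cmod (f x1))^2 * (cmod (f x2))^2 / real_of_int p) = N^2 / real_of_int p"
      unfolding N_def power2_eq_square[of "sum _ _"]
      by (simp add: sum_distrib_left sum_distrib_right sum_divide_distrib mult.commute)
    finally show ?thesis .
  qed
  define X where "X s w = (cmod (Psi p f s ((w * (1 + s * w)) mod p)))^2" for s w
  have Tot_eq: "Tot = of_real (1 / real_of_int p ^ 2 * (\<Sum>s\<in>A. \<Sum>w\<in>A. X s w))"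
  proof -
    have "Tot = (\<Sum>x1\<in>A. \<Sum>x2\<in>A. \<Sum>x3\<in>A. c * (\<Sum>w\<in>A. F x1 x2 x3 * E w x1 x2 x3))"
      unfolding Tot_def Kp_def by (simp add: sum_distrib_left mult.left_commute)
    also have "\<dots> = c * (\<Sum>x1\<in>A. \<Sum>x2\<in>A. \<Sum>x3\<in>A. \<Sum>w\<in>A. F x1 x2 x3 * E w x1 x2 x3)"
      by (simp add: sum_distrib_left)
    also have "(\<Sum>x1\<in>A. \<Sum>x2\<in>A. \<Sum>x3\<in>A. \<Sum>w\<in>A. F x1 x2 x3 * E w x1 x2 x3)
             = (\<Sum>x1\<in>A. \<Sum>x2\<in>A. \<Sum>w\<in>A. \<Sum>x3\<in>A. F x1 x2 x3 * E w x1 x2 x3)"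
      by (rule sum.cong[OF refl], rule sum.cong[OF refl], rule sum.swap)
    also have "\<dots> = (\<Sum>x1\<in>A. \<Sum>w\<in>A. \<Sum>x2\<in>A. \<Sum>x3\<in>A. F x1 x2 x3 * E w x1 x2 x3)"
      by (rule sum.cong[OF refl], rule sum.swap)
    also have "\<dots> = (\<Sum>w\<in>A. \<Sum>x1\<in>A. \<Sum>x2\<in>A. \<Sum>x3\<in>A. F x1 x2 x3 * E w x1 x2 x3)"
      by (rule sum.swap)
    also have "\<dots> = (\<Sum>w\<in>A. \<Sum>s\<in>A. of_real (X s w))"
      unfolding F_def E_def X_def A_def by (rule sum.cong[OF refl], rule inner_w[OF p0])
    also have "\<dots> = of_real (\<Sum>s\<in>A. \<Sum>w\<in>A. X s w)"
      by (subst sum.swap) simp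
    finally show ?thesis unfolding c_def by simp
  qed
  have Xb: "(\<Sum>s\<in>A. \<Sum>w\<in>A. X s w) \<le> 4 * real_of_int p * N^2"
  proof -
    have "(\<Sum>s\<in>A. \<Sum>w\<in>A. X s w) \<le> (\<Sum>s\<in>A. 4 * real_of_int p * (\<Sum>a\<in>A. (cmod (f a * f ((s - a) mod p)))^2))"
      unfolding X_def A_def by (rule sum_mono, rule psi_bound[OF p])
    also have "\<dots> = 4 * real_of_int p * N^2"
      unfolding N_def A_def by (simp add: sum_distrib_left[symmetric] conv_sum[OF p0])
    finally show ?thesis .
  qed
  have Xnn: "(\<Sum>s\<in>A. \<Sum>w\<in>A. X s w) \<ge> 0" unfolding X_def by (simp add: sum_nonneg)
  have "cmod (Tot - D) \<le> cmod Tot + cmod D" by (rule norm_triangle_ineq4)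
  also have "cmod Tot = 1 / real_of_int p ^ 2 * (\<Sum>s\<in>A. \<Sum>w\<in>A. X s w)"
    unfolding Tot_eq norm_of_real using Xnn by (intro abs_of_nonneg) simp
  also have "\<dots> \<le> 1 / real_of_int p ^ 2 * (4 * real_of_int p * N^2)"
    using Xb by (intro mult_left_mono) auto
  also have "\<dots> = 4 / real_of_int p * N^2" using p0 by (simp add: power2_eq_square)
  also have "cmod D = N^2 / real_of_int p" unfolding D_eq norm_of_real using p0 by simp
  finally have "cmod (Tot - D) \<le> 5 / real_of_int p * N^2" by (simp add: field_simps)
  then show ?thesis unfolding S_eq N_def A_def .
qed



theorem mainTheorem7:
  shows "\<exists>C::real. C > 0 \<and> (\<exists>P0::int. \<forall>(p::int) (f::int \<Rightarrow> complex).
     prime p \<and> p \<ge> P0 \<longrightarrow>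
     cmod (\<Sum>x1\<in>{0..<p}. \<Sum>x2\<in>{0..<p}. \<Sum>x3\<in>{0..<p}.
        if x1 \<noteq> x3 then f x1 * cnj (f x3) * cnj (f x2) * f ((x2 + x3 - x1) mod p)
                         * K1 p x1 x2 x3 else 0)
     \<le> C * (real_of_int p) powr (-3/4) * (norm2 p f)^4)"
proof -
  have main: "cmod (\<Sum>x1\<in>{0..<p}. \<Sum>x2\<in>{0..<p}. \<Sum>x3\<in>{0..<p}.
        if x1 \<noteq> x3 then f x1 * cnj (f x3) * cnj (f x2) * f ((x2 + x3 - x1) mod p)
                         * K1 p x1 x2 x3 else 0)
     \<le> 5 * (real_of_int p) powr (-3/4) * (norm2 p f)^4"
    if p: "prime p" and p3: "p \<ge> 3" for p :: int and f :: "int \<Rightarrow> complex"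
  proof -
    define N where "N = (\<Sum>x\<in>{0..<p}. (cmod (f x))^2)"
    have Nn: "N \<ge> 0" unfolding N_def by (simp add: sum_nonneg)
    have n4: "(norm2 p f)^4 = N^2"
    proof -
      have "(norm2 p f)^4 = ((sqrt N)^2)^2" unfolding norm2_def N_def by simp
      also have "\<dots> = N^2" using Nn by simp
      finally show ?thesis .
    qed
    have pr: "real_of_int p \<ge> 1" using p3 by simp
    have "1 / real_of_int p = real_of_int p powr (-1)"
      using pr by (simp add: powr_minus_divide)
    also have "\<dots> \<le> real_of_int p powr (-3/4)"
      using pr by (intro powr_mono) auto
    finally have pw: "1 / real_of_int p \<le> real_of_int p powr (-3/4)" .
    have "5 / real_of_int p * N^2 \<le> 5 * real_of_int p powr (-3/4) * N^2"
    proof -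
      have "5 / real_of_int p * N^2 = 5 * (1 / real_of_int p) * N^2" by simp
      also have "\<dots> \<le> 5 * real_of_int p powr (-3/4) * N^2"
        using pw by (intro mult_right_mono) auto
      finally show ?thesis .
    qed
    then show ?thesis using main_bound[OF p p3, of f] unfolding N_def[symmetric] n4 by linarith
  qed
  show ?thesis
    by (intro exI[of _ 5] conjI exI[of _ 3]) (use main in auto)
qed


end
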